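(* Let $q>3$ and $\phi\in\Phi_q$. Then: (i) for all $e<0$, $a_\phi(e)=\frac{4\pi}{3}\int_{\mathbb{R}^3}\big((1+e-\phi(x))_+^2-1\big)_+^{3/2}dx$ (finite); (ii) $a_\phi$ is $C^1$ on $(-\infty,0)$, and is a strictly increasing $C^1$ diffeomorphism from $(\inf\phi,0)$ onto $(0,+\infty)$ (where $\inf\phi$ is the essential infimum), whose inverse is denoted $a_\phi^{-1}$. Moreover there exist positive constants $C,\tilde C$ (depending only on $q$) such that for all $e<0$ and $s>0$, $$a_\phi(e)\le\frac{C}{|e|^{q-3}}\Big(1+\frac{1}{|e|^3}\Big)\|\phi\|_{L^q}^q,\qquad a_\phi^{-1}(s)\ge-\tilde C\left(\frac{\|\phi\|_{L^q}^{q/(q-3)}}{s^{1/(q-3)}}+\frac{\|\phi\|_{L^q}}{s^{1/q}}\right).$$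
   Context: For $q>3$, $\Phi_q=\{\phi\in L^q(\mathbb{R}^3):\ \phi\le0,\ m(\phi)>0,\ \nabla\phi\in L^2(\mathbb{R}^3),\ \lim_{|x|\to\infty}\phi(x)=0\}$ with $m(\phi)=\inf_{x}(1+|x|)|\phi(x)|$. For $\phi\in\Phi_q$ and $e<0$, $a_\phi(e)=\mathrm{meas}\{(x,v)\in\mathbb{R}^6:\ \sqrt{1+|v|^2}-1+\phi(x)<e\}$. *)

theory Defs
  imports "HOL-Analysis.Analysis" "HOL-Probability.Essential_Supremum"
begin

type_synonym R3 = "real^3"

definition partial_d :: "3 \<Rightarrow> (R3 \<Rightarrow> real) \<Rightarrow> R3 \<Rightarrow> real" where
  "partial_d i f x = frechet_derivative f (at x) (axis i 1)"

fun Ck_fun :: "nat \<Rightarrow> (R3 \<Rightarrow> real) \<Rightarrow> bool" where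
  "Ck_fun 0 f = continuous_on UNIV f"
| "Ck_fun (Suc k) f = ((\<forall>x. f differentiable (at x)) \<and> continuous_on UNIV f \<and>
                        (\<forall>i. Ck_fun k (partial_d i f)))"

definition test_fun :: "(R3 \<Rightarrow> real) \<Rightarrow> bool" where
  "test_fun \<psi> \<longleftrightarrow> (\<forall>k. Ck_fun k \<psi>) \<and> compact (closure {x. \<psi> x \<noteq> 0})"

definition in_Lp :: "real \<Rightarrow> (R3 \<Rightarrow> real) \<Rightarrow> bool" where
  "in_Lp p f \<longleftrightarrow> f \<in> borel_measurable lborel \<and> integrable lborel (\<lambda>x. \<bar>f x\<bar> powr p)"

definition Lp_norm :: "real \<Rightarrow> (R3 \<Rightarrow> real) \<Rightarrow> real" where
  "Lp_norm p f = (\<integral>x. \<bar>f x\<bar> powr p \<partial>lborel) powr (1/p)"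

definition weak_grad_L2 :: "(R3 \<Rightarrow> real) \<Rightarrow> bool" where
  "weak_grad_L2 \<phi> \<longleftrightarrow> (\<exists>g :: 3 \<Rightarrow> R3 \<Rightarrow> real. \<forall>i.
      in_Lp 2 (g i) \<and>
      (\<forall>\<psi>. test_fun \<psi> \<longrightarrow>
          (\<integral>x. \<phi> x * partial_d i \<psi> x \<partial>lborel) = - (\<integral>x. g i x * \<psi> x \<partial>lborel)))"

definition m_inf :: "(R3 \<Rightarrow> real) \<Rightarrow> real" where
  "m_inf \<phi> = (INF x. (1 + norm x) * \<bar>\<phi> x\<bar>)"

definition Phi_q :: "real \<Rightarrow> (R3 \<Rightarrow> real) set" where
  "Phi_q q = {\<phi>. in_Lp q \<phi> \<and> (\<forall>x. \<phi> x \<le> 0) \<and> m_inf \<phi> > 0 \<and> weak_grad_L2 \<phi> \<and>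
               (\<phi> \<longlongrightarrow> 0) at_infinity}"

definition a_set :: "(R3 \<Rightarrow> real) \<Rightarrow> real \<Rightarrow> (R3 \<times> R3) set" where
  "a_set \<phi> e = {(x, v). sqrt (1 + (norm v)\<^sup>2) - 1 + \<phi> x < e}"

definition a_phi :: "(R3 \<Rightarrow> real) \<Rightarrow> real \<Rightarrow> real" where
  "a_phi \<phi> e = measure lborel (a_set \<phi> e)"

definition ess_inf :: "(R3 \<Rightarrow> real) \<Rightarrow> ereal" where
  "ess_inf \<phi> = - esssup lborel (\<lambda>x. ereal (- \<phi> x))"

end

theory Submission imports Defs begin

definition gg :: "real \<Rightarrow> real" where
  "gg t = (max 0 ((max 0 (1 + t))\<^sup>2 - 1)) powr (3/2)"

definition hh :: "real \<Rightarrow> real" where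
  "hh t = 3 * sqrt (max 0 t * (2 + max 0 t)) * (1 + max 0 t)"

lemma powr_three_halves: "(X::real) \<ge> 0 \<Longrightarrow> X powr (3/2) = X * sqrt X"
proof (cases "X = 0")
  case False
  assume "X \<ge> 0"
  then have "X > 0" using False by simp
  have "X powr (3/2) = X powr (1 + 1/2)" by simp
  also have "\<dots> = X powr 1 * X powr (1/2)" by (rule powr_add)
  also have "\<dots> = X * sqrt X" using \<open>X > 0\<close> by (simp add: powr_half_sqrt)
  finally show ?thesis .
qed simp

lemma gg_alt: "gg t = (max 0 t * (2 + max 0 t)) powr (3/2)"
proof (cases "t \<ge> 0")
  case True
  then show ?thesis by (simp add: gg_def max_def power2_eq_square algebra_simps)
next
  case False
  have "max 0 ((max 0 (1 + t))\<^sup>2 - 1) = 0"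
  proof (cases "1 + t \<ge> 0")
    case True
    have "(1+t)^2 \<le> 1^2" using True False by (intro power_mono) auto
    then show ?thesis using True by simp
  next
    case False
    then show ?thesis by simp
  qed
  then show ?thesis using False by (simp add: gg_def)
qed

lemma gg_nonpos: "t \<le> 0 \<Longrightarrow> gg t = 0"
  by (simp add: gg_alt max_def)

lemma gg_nonneg: "gg t \<ge> 0"
  by (simp add: gg_def)

lemma gg_eq: "gg t = (max 0 t * (2 + max 0 t)) * sqrt (max 0 t * (2 + max 0 t))"
  by (simp add: gg_alt powr_three_halves)

lemma gg_mono: "s \<le> t \<Longrightarrow> gg s \<le> gg t"
  unfolding gg_eq
  by (intro mult_mono real_sqrt_le_mono) (auto simp: max_def)

lemma hh_nonneg: "hh t \<ge> 0"
  by (simp add: hh_def)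

lemma hh_mono: "s \<le> t \<Longrightarrow> hh s \<le> hh t"
  unfolding hh_def
  by (intro mult_mono real_sqrt_le_mono) (auto simp: max_def)

lemma hh_pos: "t > 0 \<Longrightarrow> hh t > 0"
  by (simp add: hh_def max_def)

lemma hh_cont: "continuous_on UNIV hh"
  unfolding hh_def by (intro continuous_intros)

lemma isCont_hh: "isCont hh t"
  using hh_cont by (simp add: continuous_on_eq_continuous_at)

lemma gg_deriv: "(gg has_real_derivative hh t) (at t)"
proof -
  consider "t > 0" | "t < 0" | "t = 0" by linarith
  then show ?thesis
  proof cases
    case 1
    have t: "t > 0" by (rule 1)
    have d0: "((\<lambda>x. x*(2+x)) has_real_derivative (2 + 2*t)) (at t)" by (auto intro!: derivative_eq_intros)
    have p: "t*(2+t) > 0" using t by simp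
    have D: "((\<lambda>y. (y * (2 + y)) powr (3/2)) has_real_derivative
              ((3/2) * (t * (2 + t)) powr (3/2 - 1)) * (2 + 2*t)) (at t)"
      by (rule DERIV_chain2[OF has_real_derivative_powr[OF p] d0])
    have e1: "(t * (2 + t)) powr (3/2 - 1) = sqrt (t * (2+t))"
      using p by (simp add: powr_half_sqrt)
    have E: "((3/2) * (t * (2 + t)) powr (3/2 - 1)) * (2 + 2*t) = hh t"
      unfolding e1 using t by (simp add: field_simps hh_def max_def)
    have d2: "((\<lambda>y. (y * (2 + y)) powr (3/2)) has_real_derivative hh t) (at t)"
      by (rule DERIV_cong[OF D E])
    show ?thesis
      by (rule has_field_derivative_transform_within_open[OF d2, of "{0<..}"])
         (use 1 in \<open>auto simp: gg_alt\<close>)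
  next
    case 2
    have "hh t = 0" using 2 by (simp add: hh_def)
    moreover have d: "((\<lambda>y. 0) has_real_derivative 0) (at t)" by simp
    ultimately show ?thesis
      using has_field_derivative_transform_within_open[OF d, of "{..<0}" gg] 2
      by (simp add: gg_nonpos)
  next
    case 3
    have h0: "hh t = 0" using 3 by (simp add: hh_def)
    have "((\<lambda>y. (gg y - gg 0) / (y - 0)) \<longlongrightarrow> 0) (at 0)"
    proof (rule Lim_null_comparison)
      show "\<forall>\<^sub>F y in at 0. norm ((gg y - gg 0) / (y - 0)) \<le> 3 * sqrt (3 * \<bar>y\<bar>)"
        unfolding eventually_at
      proof (intro exI[of _ 1] conjI allI impI ballI)
        fix y :: real assume y: "y \<noteq> 0 \<and> dist y 0 < 1"
        show "norm ((gg y - gg 0) / (y - 0)) \<le> 3 * sqrt (3 * \<bar>y\<bar>)"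
        proof (cases "y > 0")
          case True
          have yl: "y < 1" using y by (simp add: dist_norm abs_if split: if_splits)
          have "gg y = (y * (2 + y)) * sqrt (y * (2 + y))" using True by (simp add: gg_eq max_def)
          also have "\<dots> \<le> (3 * y) * sqrt (3 * y)"
          proof -
            have a: "y * (2 + y) \<le> 3 * y" using True yl by (simp add: algebra_simps)
            show ?thesis by (rule mult_mono[OF a real_sqrt_le_mono[OF a]]) (use True in auto)
          qed
          finally have "gg y / y \<le> 3 * sqrt (3 * y)" using True by (simp add: field_simps)
          moreover have "gg 0 = 0" by (simp add: gg_nonpos)
          ultimately show ?thesis using True gg_nonneg[of y] by (simp add: abs_of_nonneg)
        next
          case False
          then have "gg y = 0" by (simp add: gg_nonpos)
          then show ?thesis by (simp add: gg_nonpos)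
        qed
      qed simp
      show "((\<lambda>y. 3 * sqrt (3 * \<bar>y\<bar>)) \<longlongrightarrow> 0) (at 0)"
      proof -
        have "((\<lambda>y. 3 * sqrt (3 * \<bar>y\<bar>)) \<longlongrightarrow> 3 * sqrt (3 * \<bar>0::real\<bar>)) (at 0)"
          by (intro tendsto_intros)
        then show ?thesis by simp
      qed
    qed
    then show ?thesis using 3 h0 by (simp add: has_field_derivative_iff)
  qed
qed

lemma gg_cont: "continuous_on UNIV gg"
  using gg_deriv DERIV_isCont continuous_at_imp_continuous_on by blast

lemma gg_mvt: "a \<le> b \<Longrightarrow> gg b - gg a \<le> (b - a) * hh b"
proof (cases "a = b")
  case False
  assume "a \<le> b"
  then have "a < b" using False by simp
  from MVT2[OF this, of gg hh] gg_deriv obtain z where z: "a < z" "z < b" "gg b - gg a = (b - a) * hh z"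
    by blast
  then show ?thesis using hh_mono[of z b] \<open>a < b\<close> by (simp add: mult_left_mono)
qed simp


lemma pow_le_powr:
  fixes u d q :: real and k :: nat
  assumes "d > 0" "u \<ge> d" "q \<ge> k"
  shows "u ^ k \<le> u powr q / d powr (q - k)"
proof -
  have u: "u > 0" using assms by simp
  have "u powr q = u powr (real k) * u powr (q - k)" by (simp add: powr_add[symmetric])
  then have eq: "u powr q = u ^ k * u powr (q - k)" using u by (simp add: powr_realpow)
  have "d powr (q - k) \<le> u powr (q - k)"
    using assms by (intro powr_mono2) auto
  then have "u ^ k * d powr (q - k) \<le> u powr q"
    unfolding eq using u by (intro mult_left_mono) auto
  moreover have "d powr (q - k) > 0" using assms by simp
  ultimately show ?thesis by (simp add: field_simps)
qed

lemma cube_bound: "(x::real) \<ge> 0 \<Longrightarrow> (1 + x) ^ 3 \<le> 4 * (1 + x ^ 3)"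
proof -
  assume x: "x \<ge> 0"
  have id: "(1 + x) ^ 3 = 4 * (1 + x ^ 3) - 3 * ((1 - x)^2 * (1 + x))"
    by (simp add: power3_eq_cube power2_eq_square algebra_simps)
  have "0 \<le> (1 - x)^2 * (1 + x)" using x by simp
  then show ?thesis unfolding id by linarith
qed

lemma gg_le_cube: "u \<ge> 0 \<Longrightarrow> gg u \<le> (1 + u) ^ 3"
proof -
  assume u: "u \<ge> 0"
  have a: "u * (2 + u) \<le> (1 + u)^2" by (simp add: power2_eq_square algebra_simps)
  have b: "sqrt (u * (2 + u)) \<le> 1 + u"
    using real_sqrt_le_mono[OF a] u by simp
  have "gg u = (u * (2 + u)) * sqrt (u * (2 + u))" using u by (simp add: gg_eq max_def)
  also have "\<dots> \<le> (1 + u)^2 * (1 + u)"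
    by (rule mult_mono[OF a b]) (use u in auto)
  also have "\<dots> = (1 + u) ^ 3" by (simp add: power2_eq_square power3_eq_cube)
  finally show ?thesis .
qed

lemma hh_le_square: "u \<ge> 0 \<Longrightarrow> hh u \<le> 3 * (1 + u) ^ 2"
proof -
  assume u: "u \<ge> 0"
  have a: "u * (2 + u) \<le> (1 + u)^2" by (simp add: power2_eq_square algebra_simps)
  have b: "sqrt (u * (2 + u)) \<le> 1 + u"
    using real_sqrt_le_mono[OF a] u by simp
  have "hh u = 3 * sqrt (u * (2 + u)) * (1 + u)" using u by (simp add: hh_def max_def)
  also have "\<dots> \<le> 3 * (1 + u) * (1 + u)"
    using b u by (intro mult_right_mono) auto
  also have "\<dots> = 3 * (1 + u) ^ 2" by (simp add: power2_eq_square)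
  finally show ?thesis .
qed

lemma one_plus_le: "(d::real) > 0 \<Longrightarrow> u \<ge> d \<Longrightarrow> 1 + u \<le> u * (1 + 1 / d)"
proof -
  assume d: "d > 0" and u: "u \<ge> d"
  have "1 \<le> u / d" using d u by (simp add: le_divide_eq_1_pos)
  moreover have "u * (1 + 1 / d) = u + u / d" by (simp add: distrib_left)
  ultimately show ?thesis by linarith
qed

definition Kg :: "real \<Rightarrow> real \<Rightarrow> real" where
  "Kg q d = 4 * (1 + 1 / d ^ 3) / d powr (q - 3)"

definition Kh :: "real \<Rightarrow> real \<Rightarrow> real" where
  "Kh q d = 3 * (1 + 1 / d) ^ 2 / d powr (q - 2)"

lemma Kg_pos: "d > 0 \<Longrightarrow> Kg q d > 0"
  by (simp add: Kg_def add_pos_pos)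

lemma Kh_pos: "d > 0 \<Longrightarrow> Kh q d > 0"
proof -
  assume d: "d > 0"
  have "1 + 1 / d > 0" using d by (intro add_pos_pos) auto
  then have "(1 + 1 / d) ^ 2 > 0" by simp
  then show ?thesis unfolding Kh_def using d by simp
qed

lemma gg_pt_bound:
  fixes e p q :: real
  assumes e: "e < 0" and p: "p \<le> 0" and q: "q \<ge> 3"
  shows "gg (e - p) \<le> Kg q (- e) * \<bar>p\<bar> powr q"
proof (cases "e - p \<le> 0")
  case True
  then show ?thesis using Kg_pos[of "-e" q] e by (simp add: gg_nonpos)
next
  case False
  define d where "d = - e"
  define u where "u = - p"
  have d: "d > 0" using e by (simp add: d_def)
  have du: "u \<ge> d" using False by (simp add: d_def u_def)
  have u0: "u \<ge> 0" using d du by simp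
  have "gg (e - p) \<le> gg u" by (rule gg_mono) (use d in \<open>simp add: d_def u_def\<close>)
  also have "\<dots> \<le> (1 + u) ^ 3" by (rule gg_le_cube[OF u0])
  also have "\<dots> \<le> (u * (1 + 1 / d)) ^ 3"
    by (rule power_mono[OF one_plus_le[OF d du]]) (use u0 in simp)
  also have "\<dots> = u ^ 3 * (1 + 1 / d) ^ 3" by (simp add: power_mult_distrib)
  also have "\<dots> \<le> u ^ 3 * (4 * (1 + (1 / d) ^ 3))"
    by (rule mult_left_mono[OF cube_bound]) (use d u0 in auto)
  also have "\<dots> \<le> (u powr q / d powr (q - 3)) * (4 * (1 + (1 / d) ^ 3))"
    using pow_le_powr[OF d du, where q=q and k=3] q d by (intro mult_right_mono) auto
  also have "\<dots> = Kg q (- e) * \<bar>p\<bar> powr q"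
    using p by (simp add: Kg_def d_def u_def power_divide)
  finally show ?thesis .
qed

lemma hh_pt_bound:
  fixes e p q :: real
  assumes e: "e < 0" and p: "p \<le> 0" and q: "q \<ge> 3"
  shows "hh (e - p) \<le> Kh q (- e) * \<bar>p\<bar> powr q"
proof (cases "e - p \<le> 0")
  case True
  then show ?thesis using Kh_pos[of "-e" q] e by (simp add: hh_def max_def)
next
  case False
  define d where "d = - e"
  define u where "u = - p"
  have d: "d > 0" using e by (simp add: d_def)
  have du: "u \<ge> d" using False by (simp add: d_def u_def)
  have u0: "u \<ge> 0" using d du by simp
  have "hh (e - p) \<le> hh u" by (rule hh_mono) (use d in \<open>simp add: d_def u_def\<close>)
  also have "\<dots> \<le> 3 * (1 + u) ^ 2" by (rule hh_le_square[OF u0])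
  also have "\<dots> \<le> 3 * (u * (1 + 1 / d)) ^ 2"
    using power_mono[OF one_plus_le[OF d du], of 2] u0 by simp
  also have "\<dots> = 3 * (1 + 1 / d) ^ 2 * u ^ 2" by (simp add: power_mult_distrib)
  also have "\<dots> \<le> 3 * (1 + 1 / d) ^ 2 * (u powr q / d powr (q - 2))"
    using pow_le_powr[OF d du, where q=q and k=2] q d by (intro mult_left_mono) auto
  also have "\<dots> = Kh q (- e) * \<bar>p\<bar> powr q"
    using p by (simp add: Kh_def d_def u_def)
  finally show ?thesis .
qed


lemma gg_borel[measurable]: "gg \<in> borel_measurable borel"
  using gg_cont by (rule borel_measurable_continuous_onI)

lemma hh_borel[measurable]: "hh \<in> borel_measurable borel"
  using hh_cont by (rule borel_measurable_continuous_onI)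

lemma sqrt_fiber_iff:
  fixes n t :: real
  assumes n: "n \<ge> 0"
  shows "sqrt (1 + n^2) < 1 + t \<longleftrightarrow> n < sqrt (max 0 ((max 0 (1 + t))\<^sup>2 - 1))"
proof
  assume h: "sqrt (1 + n^2) < 1 + t"
  have s1: "sqrt (1 + n^2) \<ge> 1" by simp
  then have t: "1 + t > 0" using h by linarith
  have "1 + n^2 < (1 + t)^2"
  proof -
    have "sqrt (1 + n^2) ^ 2 < (1 + t)^2"
      using h s1 by (intro power_strict_mono) auto
    then show ?thesis by simp
  qed
  then have "n^2 < max 0 ((max 0 (1 + t))\<^sup>2 - 1)" using t by simp
  then show "n < sqrt (max 0 ((max 0 (1 + t))\<^sup>2 - 1))" by (rule real_less_rsqrt)
next
  assume h: "n < sqrt (max 0 ((max 0 (1 + t))\<^sup>2 - 1))"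
  have "n^2 < sqrt (max 0 ((max 0 (1 + t))\<^sup>2 - 1)) ^ 2"
    using h n by (intro power_strict_mono) auto
  then have h2: "n^2 < max 0 ((max 0 (1 + t))\<^sup>2 - 1)" by simp
  have "0 \<le> n^2" by simp
  then have h3: "1 + n^2 < (max 0 (1 + t))\<^sup>2" using h2 by (simp add: max_def split: if_splits)
  have "max 0 (1 + t) \<noteq> 0"
  proof
    assume "max 0 (1 + t) = 0"
    with h3 have "1 + n^2 < 0" by simp
    with \<open>0 \<le> n^2\<close> show False by linarith
  qed
  then have t: "max 0 (1 + t) = 1 + t" "1 + t > 0" by (auto simp: max_def split: if_splits)
  have "sqrt (1 + n^2) < sqrt ((1 + t)^2)" using h3 t by (simp only: real_sqrt_less_iff)
  then show "sqrt (1 + n^2) < 1 + t" using t by simp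
qed

lemma sqrt_cube: "(X::real) \<ge> 0 \<Longrightarrow> sqrt X ^ 3 = X * sqrt X"
proof -
  assume "X \<ge> 0"
  then have "sqrt X ^ 3 = sqrt X ^ 2 * sqrt X" by (simp add: power3_eq_cube power2_eq_square)
  then show ?thesis using \<open>X \<ge> 0\<close> by simp
qed

lemma gg_sqrt_cube: "gg t = sqrt (max 0 ((max 0 (1 + t))\<^sup>2 - 1)) ^ 3"
  unfolding gg_def by (subst sqrt_cube) (auto simp: powr_three_halves)

lemma DIM_R3: "DIM(R3) = 3" by simp

locale phi_ctx =
  fixes \<phi> :: "R3 \<Rightarrow> real" and q :: real
  assumes meas[measurable]: "\<phi> \<in> borel_measurable lborel"
    and nonpos: "\<And>x. \<phi> x \<le> 0"
    and intq: "integrable lborel (\<lambda>x. \<bar>\<phi> x\<bar> powr q)"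
    and q3: "q > 3"
begin

definition AA :: "real \<Rightarrow> real" where
  "AA e = (\<integral>x. gg (e - \<phi> x) \<partial>lborel)"

definition BB :: "real \<Rightarrow> real" where
  "BB e = (\<integral>x. hh (e - \<phi> x) \<partial>lborel)"

lemma int_g: assumes e: "e < 0" shows "integrable lborel (\<lambda>x. gg (e - \<phi> x))"
proof (rule Bochner_Integration.integrable_bound)
  show "integrable lborel (\<lambda>x. Kg q (- e) * \<bar>\<phi> x\<bar> powr q)"
    using intq by (rule integrable_mult_right)
  show "(\<lambda>x. gg (e - \<phi> x)) \<in> borel_measurable lborel" by measurable
  show "AE x in lborel. norm (gg (e - \<phi> x)) \<le> norm (Kg q (- e) * \<bar>\<phi> x\<bar> powr q)"
  proof (rule AE_I2)
    fix x
    have "gg (e - \<phi> x) \<le> Kg q (- e) * \<bar>\<phi> x\<bar> powr q"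
      using gg_pt_bound[OF e nonpos[of x], of q] q3 by simp
    then show "norm (gg (e - \<phi> x)) \<le> norm (Kg q (- e) * \<bar>\<phi> x\<bar> powr q)"
      using gg_nonneg[of "e - \<phi> x"] Kg_pos[of "-e" q] e by simp
  qed
qed

lemma int_h: assumes e: "e < 0" shows "integrable lborel (\<lambda>x. hh (e - \<phi> x))"
proof (rule Bochner_Integration.integrable_bound)
  show "integrable lborel (\<lambda>x. Kh q (- e) * \<bar>\<phi> x\<bar> powr q)"
    using intq by (rule integrable_mult_right)
  show "(\<lambda>x. hh (e - \<phi> x)) \<in> borel_measurable lborel" by measurable
  show "AE x in lborel. norm (hh (e - \<phi> x)) \<le> norm (Kh q (- e) * \<bar>\<phi> x\<bar> powr q)"
  proof (rule AE_I2)
    fix x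
    have "hh (e - \<phi> x) \<le> Kh q (- e) * \<bar>\<phi> x\<bar> powr q"
      using hh_pt_bound[OF e nonpos[of x], of q] q3 by simp
    then show "norm (hh (e - \<phi> x)) \<le> norm (Kh q (- e) * \<bar>\<phi> x\<bar> powr q)"
      using hh_nonneg[of "e - \<phi> x"] Kh_pos[of "-e" q] e by simp
  qed
qed

lemma a_set_sets: "a_set \<phi> e \<in> sets (lborel \<Otimes>\<^sub>M lborel)"
proof -
  have "a_set \<phi> e = {p \<in> space (lborel \<Otimes>\<^sub>M lborel). sqrt (1 + (norm (snd p))\<^sup>2) - 1 + \<phi> (fst p) < e}"
    by (auto simp: a_set_def space_pair_measure)
  also have "\<dots> \<in> sets (lborel \<Otimes>\<^sub>M lborel)" by measurable
  finally show ?thesis .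
qed

lemma fiber: "Pair x -` a_set \<phi> e = ball 0 (sqrt (max 0 ((max 0 (1 + (e - \<phi> x)))\<^sup>2 - 1)))"
proof (rule set_eqI)
  fix v :: R3
  have k1: "sqrt (1 + (norm v)\<^sup>2) - 1 + \<phi> x < e \<longleftrightarrow> sqrt (1 + (norm v)\<^sup>2) < 1 + (e - \<phi> x)"
    by arith
  have k2: "v \<in> ball 0 r \<longleftrightarrow> norm v < r" for r by (simp add: dist_norm)
  have k3: "v \<in> Pair x -` a_set \<phi> e \<longleftrightarrow> sqrt (1 + (norm v)\<^sup>2) - 1 + \<phi> x < e"
    by (simp add: a_set_def)
  show "v \<in> Pair x -` a_set \<phi> e \<longleftrightarrow> v \<in> ball 0 (sqrt (max 0 ((max 0 (1 + (e - \<phi> x)))\<^sup>2 - 1)))"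
    unfolding k3 k2 k1 by (rule sqrt_fiber_iff[OF norm_ge_zero])
qed

lemma emeasure_a_set: assumes e: "e < 0"
  shows "emeasure lborel (a_set \<phi> e) = ennreal (4 * pi / 3 * AA e)"
proof -
  have "emeasure lborel (a_set \<phi> e) = emeasure (lborel \<Otimes>\<^sub>M lborel) (a_set \<phi> e)"
    by (simp only: lborel_prod)
  also have "\<dots> = (\<integral>\<^sup>+ x. emeasure lborel (Pair x -` a_set \<phi> e) \<partial>lborel)"
    by (rule lborel.emeasure_pair_measure_alt[OF a_set_sets])
  also have "\<dots> = (\<integral>\<^sup>+ x. ennreal (4 * pi / 3 * gg (e - \<phi> x)) \<partial>lborel)"
  proof (rule nn_integral_cong)
    fix x
    show "emeasure lborel (Pair x -` a_set \<phi> e) = ennreal (4 * pi / 3 * gg (e - \<phi> x))"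
    proof -
      have b: "emeasure lborel (ball (0::R3) r) = ennreal (4 * pi / 3 * r ^ 3)" if "r \<ge> 0" for r
      proof -
        have "emeasure lborel (ball (0::R3) r) = ennreal (unit_ball_vol (real DIM(R3)) * r ^ DIM(R3))"
          by (rule emeasure_ball[OF that])
        also have "\<dots> = ennreal (4 * pi / 3 * r ^ 3)" by (simp add: unit_ball_vol_3)
        finally show ?thesis .
      qed
      show ?thesis unfolding fiber gg_sqrt_cube by (rule b) simp
    qed
  qed
  also have "\<dots> = ennreal (\<integral>x. 4 * pi / 3 * gg (e - \<phi> x) \<partial>lborel)"
    by (rule nn_integral_eq_integral) (use integrable_mult_right[OF int_g[OF e], of "4 * pi / 3"] in \<open>auto simp: gg_nonneg\<close>)
  also have "\<dots> = ennreal (4 * pi / 3 * AA e)" by (simp add: AA_def)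
  finally show ?thesis .
qed

end


lemma DC_at:
  fixes s :: "real \<Rightarrow> 'a \<Rightarrow> real" and w f :: "'a \<Rightarrow> real"
  assumes sm: "\<And>t. t \<in> S \<Longrightarrow> s t \<in> borel_measurable M"
    and fm: "f \<in> borel_measurable M" and wi: "integrable M w"
    and lim: "\<And>x. x \<in> space M \<Longrightarrow> ((\<lambda>t. s t x) \<longlongrightarrow> f x) (at t0 within S)"
    and bnd: "\<And>t x. t \<in> S \<Longrightarrow> x \<in> space M \<Longrightarrow> \<bar>s t x\<bar> \<le> w x"
  shows "((\<lambda>t. integral\<^sup>L M (s t)) \<longlongrightarrow> integral\<^sup>L M f) (at t0 within S)"
  unfolding tendsto_at_iff_sequentially
proof (intro allI impI)
  fix X :: "nat \<Rightarrow> real"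
  assume X: "\<forall>i. X i \<in> S - {t0}" and Xl: "X \<longlonglongrightarrow> t0"
  show "((\<lambda>t. integral\<^sup>L M (s t)) \<circ> X) \<longlonglongrightarrow> integral\<^sup>L M f"
    unfolding o_def
  proof (rule integral_dominated_convergence[where w=w])
    show "f \<in> borel_measurable M" by (rule fm)
    show "s (X i) \<in> borel_measurable M" for i using X sm by blast
    show "integrable M w" by (rule wi)
    show "AE x in M. (\<lambda>i. s (X i) x) \<longlonglongrightarrow> f x"
    proof (rule AE_I2)
      fix x assume x: "x \<in> space M"
      have "((\<lambda>t. s t x) \<circ> X) \<longlonglongrightarrow> f x"
        using lim[OF x] X Xl unfolding tendsto_at_iff_sequentially by blast
      then show "(\<lambda>i. s (X i) x) \<longlonglongrightarrow> f x" by (simp add: o_def)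
    qed
    show "AE x in M. norm (s (X i) x) \<le> w x" for i
      using X bnd by (intro AE_I2) auto
  qed
qed

context phi_ctx
begin

lemma AA_nonneg: "AA e \<ge> 0"
  unfolding AA_def by (rule integral_nonneg_AE) (simp add: gg_nonneg)

lemma BB_nonneg: "BB e \<ge> 0"
  unfolding BB_def by (rule integral_nonneg_AE) (simp add: hh_nonneg)

lemma quot_bound:
  fixes y e p :: real
  assumes "y \<le> c" "e \<le> c"
  shows "\<bar>(gg (y - p) - gg (e - p)) / (y - e)\<bar> \<le> hh (c - p)"
proof -
  consider "y > e" | "y < e" | "y = e" by linarith
  then show ?thesis
  proof cases
    case 1
    have a: "gg (y - p) - gg (e - p) \<le> (y - e) * hh (y - p)"
      using gg_mvt[of "e - p" "y - p"] 1 by simp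
    have b: "gg (e - p) \<le> gg (y - p)" using 1 by (intro gg_mono) simp
    have c: "hh (y - p) \<le> hh (c - p)" using assms by (intro hh_mono) simp
    have "(gg (y - p) - gg (e - p)) / (y - e) \<le> hh (y - p)"
      using a 1 by (simp add: divide_le_eq mult.commute)
    moreover have "(gg (y - p) - gg (e - p)) / (y - e) \<ge> 0" using b 1 by simp
    ultimately show ?thesis using c by (metis abs_of_nonneg order_trans)
  next
    case 2
    have a: "gg (e - p) - gg (y - p) \<le> (e - y) * hh (e - p)"
      using gg_mvt[of "y - p" "e - p"] 2 by simp
    have b: "gg (y - p) \<le> gg (e - p)" using 2 by (intro gg_mono) simp
    have c: "hh (e - p) \<le> hh (c - p)" using assms by (intro hh_mono) simp
    have eq: "(gg (y - p) - gg (e - p)) / (y - e) = (gg (e - p) - gg (y - p)) / (e - y)"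
      by (simp add: divide_simps) (simp add: algebra_simps)
    have "(gg (e - p) - gg (y - p)) / (e - y) \<le> hh (e - p)"
      using a 2 by (simp add: divide_le_eq mult.commute)
    moreover have "(gg (e - p) - gg (y - p)) / (e - y) \<ge> 0" using b 2 by simp
    ultimately show ?thesis using c eq by (metis abs_of_nonneg order_trans)
  next
    case 3
    then show ?thesis using hh_nonneg by simp
  qed
qed

lemma AA_deriv: assumes e: "e < 0" shows "(AA has_real_derivative BB e) (at e)"
proof -
  define S where "S = ball e (- e / 2)"
  have eS: "e \<in> S" "open S" using e by (auto simp: S_def)
  have yS: "y < e / 2" if "y \<in> S" for y
    using that by (auto simp: S_def dist_real_def abs_if split: if_splits)
  define qq where "qq = (\<lambda>y x. (gg (y - \<phi> x) - gg (e - \<phi> x)) / (y - e))"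
  have lim: "((\<lambda>y. integral\<^sup>L lborel (qq y)) \<longlongrightarrow> BB e) (at e within S)"
    unfolding BB_def
  proof (rule DC_at[where w="\<lambda>x. hh (e / 2 - \<phi> x)"])
    show "qq y \<in> borel_measurable lborel" for y unfolding qq_def by measurable
    show "(\<lambda>x. hh (e - \<phi> x)) \<in> borel_measurable lborel" by measurable
    show "integrable lborel (\<lambda>x. hh (e / 2 - \<phi> x))" using e by (intro int_h) simp
    show "((\<lambda>y. qq y x) \<longlongrightarrow> hh (e - \<phi> x)) (at e within S)" for x
    proof -
      have d1: "((\<lambda>y. y - \<phi> x) has_real_derivative 1) (at e)" by (auto intro!: derivative_eq_intros)
      have "((\<lambda>y. gg (y - \<phi> x)) has_real_derivative hh (e - \<phi> x) * 1) (at e)"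
        using DERIV_chain2[OF gg_deriv d1] .
      then have "((\<lambda>y. qq y x) \<longlongrightarrow> hh (e - \<phi> x)) (at e)"
        unfolding qq_def by (simp add: has_field_derivative_iff)
      then show ?thesis by (rule Lim_at_imp_Lim_at_within)
    qed
    show "\<bar>qq y x\<bar> \<le> hh (e / 2 - \<phi> x)" if "y \<in> S" for y x
      unfolding qq_def using yS[OF that] e by (intro quot_bound) auto
  qed
  have ev: "\<forall>\<^sub>F y in at e within S. integral\<^sup>L lborel (qq y) = (AA y - AA e) / (y - e)"
    unfolding eventually_at_filter
  proof (rule always_eventually, intro allI impI)
    fix y assume "y \<noteq> e" "y \<in> S"
    then have y0: "y < 0" using yS e by fastforce
    have "integral\<^sup>L lborel (qq y) = (\<integral>x. gg (y - \<phi> x) - gg (e - \<phi> x) \<partial>lborel) / (y - e)"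
      unfolding qq_def by (rule integral_divide_zero)
    also have "(\<integral>x. gg (y - \<phi> x) - gg (e - \<phi> x) \<partial>lborel) = AA y - AA e"
      unfolding AA_def by (rule Bochner_Integration.integral_diff[OF int_g[OF y0] int_g[OF e]])
    finally show "integral\<^sup>L lborel (qq y) = (AA y - AA e) / (y - e)" .
  qed
  have "((\<lambda>y. (AA y - AA e) / (y - e)) \<longlongrightarrow> BB e) (at e within S)"
    using tendsto_cong[OF ev] lim by simp
  then have "((\<lambda>y. (AA y - AA e) / (y - e)) \<longlongrightarrow> BB e) (at e)"
    using at_within_open[OF eS] by simp
  then show ?thesis by (simp add: has_field_derivative_iff)
qed

lemma BB_cont: assumes e: "e < 0" shows "isCont BB e"
proof -
  define S where "S = ball e (- e / 2)"
  have eS: "e \<in> S" "open S" using e by (auto simp: S_def)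
  have yS: "y < e / 2" if "y \<in> S" for y
    using that by (auto simp: S_def dist_real_def abs_if split: if_splits)
  have "((\<lambda>y. BB y) \<longlongrightarrow> BB e) (at e within S)"
    unfolding BB_def
  proof (rule DC_at[where w="\<lambda>x. hh (e / 2 - \<phi> x)"])
    show "(\<lambda>x. hh (y - \<phi> x)) \<in> borel_measurable lborel" for y by measurable
    show "(\<lambda>x. hh (e - \<phi> x)) \<in> borel_measurable lborel" by measurable
    show "integrable lborel (\<lambda>x. hh (e / 2 - \<phi> x))" using e by (intro int_h) simp
    show "((\<lambda>y. hh (y - \<phi> x)) \<longlongrightarrow> hh (e - \<phi> x)) (at e within S)" for x
    proof -
      have "((\<lambda>y. y - \<phi> x) \<longlongrightarrow> e - \<phi> x) (at e within S)" by (intro tendsto_intros)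
      then show ?thesis by (rule isCont_tendsto_compose[OF isCont_hh])
    qed
    show "\<bar>hh (y - \<phi> x)\<bar> \<le> hh (e / 2 - \<phi> x)" if "y \<in> S" for y x
      using yS[OF that] hh_nonneg[of "y - \<phi> x"] by (simp add: hh_mono)
  qed
  then show ?thesis using at_within_open[OF eS] by (simp add: isCont_def)
qed

lemma AA_cont: "e < 0 \<Longrightarrow> isCont AA e"
  using AA_deriv DERIV_isCont by blast

lemma AA_mono: "e1 \<le> e2 \<Longrightarrow> e2 < 0 \<Longrightarrow> AA e1 \<le> AA e2"
  unfolding AA_def
  by (rule integral_mono[OF int_g int_g]) (auto intro: gg_mono)

end


lemma gg_zero_iff: "gg t = 0 \<longleftrightarrow> t \<le> 0"
proof
  assume h: "gg t = 0"
  show "t \<le> 0"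
  proof (rule ccontr)
    assume "\<not> t \<le> 0"
    then have t: "t > 0" by simp
    then have "t * (2 + t) > 0" by simp
    then have "gg t > 0" using t by (simp add: gg_eq max_def)
    with h show False by simp
  qed
qed (rule gg_nonpos)

lemma hh_zero_iff: "hh t = 0 \<longleftrightarrow> t \<le> 0"
proof
  assume h: "hh t = 0"
  show "t \<le> 0"
  proof (rule ccontr)
    assume "\<not> t \<le> 0"
    then have "hh t > 0" by (intro hh_pos) simp
    with h show False by simp
  qed
qed (simp add: hh_def max_def)

context phi_ctx
begin

lemma ess_AE: "ereal e \<le> ess_inf \<phi> \<Longrightarrow> AE x in lborel. e \<le> \<phi> x"
proof -
  assume h: "ereal e \<le> ess_inf \<phi>"
  have "- ereal (- e) \<le> - esssup lborel (\<lambda>x. ereal (- \<phi> x))"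
    using h unfolding ess_inf_def by simp
  then have E: "esssup lborel (\<lambda>x. ereal (- \<phi> x)) \<le> ereal (- e)"
    by (simp only: ereal_minus_le_minus)
  have "AE x in lborel. ereal (- \<phi> x) \<le> ereal (- e)"
    using esssup_AE[of "\<lambda>x. ereal (- \<phi> x)" lborel]
  proof eventually_elim
    case (elim x) then show ?case using E by (rule order_trans)
  qed
  then show ?thesis by eventually_elim simp
qed

lemma AE_ess: "AE x in lborel. e \<le> \<phi> x \<Longrightarrow> ereal e \<le> ess_inf \<phi>"
proof -
  assume h: "AE x in lborel. e \<le> \<phi> x"
  have ae: "AE x in lborel. ereal (- \<phi> x) \<le> ereal (- e)" using h by eventually_elim simp
  have "esssup lborel (\<lambda>x. ereal (- \<phi> x)) \<le> ereal (- e)"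
    by (rule esssup_I[OF _ ae]) measurable
  then have "- ereal (- e) \<le> - esssup lborel (\<lambda>x. ereal (- \<phi> x))"
    by (simp only: ereal_minus_le_minus)
  then show ?thesis unfolding ess_inf_def by simp
qed

lemma ess_less_iff: "ess_inf \<phi> < ereal e \<longleftrightarrow> \<not> (AE x in lborel. e \<le> \<phi> x)"
  using ess_AE AE_ess not_le by blast

lemma AA_pos_iff: assumes e: "e < 0" shows "AA e > 0 \<longleftrightarrow> ess_inf \<phi> < ereal e"
proof -
  have "AA e = 0 \<longleftrightarrow> (AE x in lborel. gg (e - \<phi> x) = 0)"
    unfolding AA_def by (rule integral_nonneg_eq_0_iff_AE[OF int_g[OF e]]) (simp add: gg_nonneg)
  also have "\<dots> \<longleftrightarrow> (AE x in lborel. e \<le> \<phi> x)" by (simp add: gg_zero_iff)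
  finally show ?thesis using AA_nonneg[of e] ess_less_iff[of e] by linarith
qed

lemma BB_pos_iff: assumes e: "e < 0" shows "BB e > 0 \<longleftrightarrow> ess_inf \<phi> < ereal e"
proof -
  have "BB e = 0 \<longleftrightarrow> (AE x in lborel. hh (e - \<phi> x) = 0)"
    unfolding BB_def by (rule integral_nonneg_eq_0_iff_AE[OF int_h[OF e]]) (simp add: hh_nonneg)
  also have "\<dots> \<longleftrightarrow> (AE x in lborel. e \<le> \<phi> x)" by (simp add: hh_zero_iff)
  finally show ?thesis using BB_nonneg[of e] ess_less_iff[of e] by linarith
qed

lemma AA_strict_mono: "strict_mono_on {e. ess_inf \<phi> < ereal e \<and> e < 0} AA"
proof (rule strict_mono_onI)
  fix r s assume r: "r \<in> {e. ess_inf \<phi> < ereal e \<and> e < 0}" and s: "s \<in> {e. ess_inf \<phi> < ereal e \<and> e < 0}"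
    and rs: "r < s"
  show "AA r < AA s"
  proof (rule DERIV_pos_imp_increasing[OF rs])
    fix x assume x: "r \<le> x" "x \<le> s"
    have x0: "x < 0" using x s by simp
    have "ereal r \<le> ereal x" using x by simp
    then have "ess_inf \<phi> < ereal x" using r by (auto intro: less_le_trans)
    then have "BB x > 0" using BB_pos_iff[OF x0] by simp
    then show "\<exists>y. (AA has_real_derivative y) (at x) \<and> 0 < y" using AA_deriv[OF x0] by blast
  qed
qed

end


lemma emeasure_times_R3:
  fixes A B :: "R3 set"
  assumes "A \<in> sets lborel" "B \<in> sets lborel"
  shows "emeasure (lborel :: (R3 \<times> R3) measure) (A \<times> B) = emeasure lborel A * emeasure lborel B"
proof -
  have "emeasure (lborel :: (R3 \<times> R3) measure) (A \<times> B) = emeasure (lborel \<Otimes>\<^sub>M lborel) (A \<times> B)"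
    by (simp only: lborel_prod)
  also have "\<dots> = emeasure lborel A * emeasure lborel B"
    by (rule lborel.emeasure_pair_measure_Times[OF assms])
  finally show ?thesis .
qed

lemma emeasure_ball_R3: "r \<ge> 0 \<Longrightarrow> emeasure lborel (ball (0::R3) r) = ennreal (4 * pi / 3 * r ^ 3)"
proof -
  assume r: "r \<ge> 0"
  have "emeasure lborel (ball (0::R3) r) = ennreal (unit_ball_vol (real DIM(R3)) * r ^ DIM(R3))"
    by (rule emeasure_ball[OF r])
  also have "\<dots> = ennreal (4 * pi / 3 * r ^ 3)" by (simp add: unit_ball_vol_3)
  finally show ?thesis .
qed

lemma sqrt_one_plus_le: "(a::real) \<ge> 0 \<Longrightarrow> sqrt (1 + a) \<le> 1 + a / 2"
proof -
  assume a: "a \<ge> 0"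
  have "1 + a \<le> (1 + a / 2)^2" using a by (simp add: power2_eq_square algebra_simps)
  then have "sqrt (1 + a) \<le> sqrt ((1 + a / 2)^2)" by (rule real_sqrt_le_mono)
  then show ?thesis using a by simp
qed

context phi_ctx
begin

definition NN :: real where "NN = (\<integral>x. \<bar>\<phi> x\<bar> powr q \<partial>lborel)"

lemma NN_nonneg: "NN \<ge> 0"
  unfolding NN_def by (rule integral_nonneg_AE) simp

lemma AA_bound: assumes e: "e < 0" shows "AA e \<le> Kg q (- e) * NN"
proof -
  have "AA e \<le> (\<integral>x. Kg q (- e) * \<bar>\<phi> x\<bar> powr q \<partial>lborel)"
    unfolding AA_def
  proof (rule integral_mono[OF int_g[OF e]])
    show "integrable lborel (\<lambda>x. Kg q (- e) * \<bar>\<phi> x\<bar> powr q)"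
      using intq by (rule integrable_mult_right)
    show "gg (e - \<phi> x) \<le> Kg q (- e) * \<bar>\<phi> x\<bar> powr q" for x
      using gg_pt_bound[OF e nonpos[of x], of q] q3 by simp
  qed
  also have "\<dots> = Kg q (- e) * NN" unfolding NN_def by (rule integral_mult_right_zero)
  finally show ?thesis .
qed

lemma AA_small: assumes T: "T > 0" shows "\<exists>e<0. AA e \<le> T"
proof -
  define X where "X = 8 * NN / T"
  have X0: "X \<ge> 0" using NN_nonneg T by (simp add: X_def)
  define d where "d = max 1 (X powr (1 / (q - 3)))"
  have d1: "d \<ge> 1" by (simp add: d_def)
  have dpos: "d > 0" using d1 by simp
  define P where "P = d powr (q - 3)"
  have P0: "P > 0" using dpos by (simp add: P_def)
  have "X = (X powr (1 / (q - 3))) powr (q - 3)"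
  proof (cases "X = 0")
    case False
    then have "X > 0" using X0 by simp
    then show ?thesis using q3 by (simp add: powr_powr)
  qed simp
  also have "\<dots> \<le> P" unfolding P_def
    by (rule powr_mono2) (use q3 d_def in auto)
  finally have XP: "X \<le> P" .
  have "8 * NN \<le> T * P" using XP T by (simp add: X_def divide_le_eq mult.commute)
  have kg: "Kg q d \<le> 8 / P"
  proof -
    have "1 / d ^ 3 \<le> 1" using d1 by (simp add: divide_le_eq_1 one_le_power)
    then have "4 * (1 + 1 / d ^ 3) \<le> 8" by simp
    then show ?thesis unfolding Kg_def P_def[symmetric] using P0 by (simp add: divide_right_mono)
  qed
  have "AA (- d) \<le> Kg q d * NN" using AA_bound[of "- d"] dpos by simp
  also have "\<dots> \<le> 8 / P * NN" using kg NN_nonneg by (rule mult_right_mono)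
  also have "\<dots> \<le> T" using \<open>8 * NN \<le> T * P\<close> P0 by (simp add: divide_le_eq mult.commute)
  finally show ?thesis using dpos by (intro exI[of _ "- d"]) simp
qed

lemma AA_large:
  assumes c: "c > 0" and cb: "\<And>x. c \<le> (1 + norm x) * \<bar>\<phi> x\<bar>" and T: "T > 0"
  shows "\<exists>e<0. T < 4 * pi / 3 * AA e"
proof -
  define \<delta> where "\<delta> = min 1 (min (sqrt (c / 4)) (c ^ 3 / (128 * (T + 1))))"
  have \<delta>0: "\<delta> > 0" using c T by (simp add: \<delta>_def)
  have \<delta>1: "\<delta> \<le> 1" by (simp add: \<delta>_def)
  have \<delta>c: "\<delta>^2 \<le> c / 4"
  proof -
    have "\<delta> \<le> sqrt (c / 4)" by (simp add: \<delta>_def)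
    then have "\<delta>^2 \<le> sqrt (c / 4) ^ 2" using \<delta>0 by (intro power_mono) auto
    then show ?thesis using c by simp
  qed
  have \<delta>T: "\<delta> \<le> c ^ 3 / (128 * (T + 1))" by (simp add: \<delta>_def)
  define d where "d = \<delta>^2"
  have d0: "d > 0" using \<delta>0 by (simp add: d_def)
  define R where "R = c / (2 * d) - 1"
  have R4: "R \<ge> c / (4 * d)"
  proof -
    have "4 * d \<le> c" using \<delta>c by (simp add: d_def)
    then have "1 \<le> c / (4 * d)" using d0 by (simp add: le_divide_eq_1_pos)
    moreover have "c / (2 * d) = 2 * (c / (4 * d))" by simp
    ultimately show ?thesis unfolding R_def by linarith
  qed
  have R0: "R > 0"
  proof -
    have "c / (4 * d) > 0" using c d0 by simp
    then show ?thesis using R4 by linarith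
  qed
  have sub: "ball 0 R \<times> ball 0 \<delta> \<subseteq> a_set \<phi> (- d)"
  proof (rule subsetI)
    fix p assume "p \<in> ball (0::R3) R \<times> ball (0::R3) \<delta>"
    then obtain x v where p: "p = (x, v)" and x: "x \<in> ball 0 R" and v: "v \<in> ball 0 \<delta>" by blast
    have nx: "norm x < R" using x by (simp add: dist_norm)
    have nv: "norm v < \<delta>" using v by (simp add: dist_norm)
    have lt: "1 + norm x < c / (2 * d)" using nx by (simp add: R_def)
    have pos1: "1 + norm x > 0" using norm_ge_zero[of x] by linarith
    have "(1 + norm x) * (2 * d) < c" using lt d0 by (simp add: less_divide_eq)
    then have "2 * d < c / (1 + norm x)" using pos1 by (simp add: less_divide_eq mult.commute)
    moreover have "c / (1 + norm x) \<le> \<bar>\<phi> x\<bar>"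
      using cb[of x] pos1 by (simp add: divide_le_eq mult.commute)
    ultimately have "2 * d < \<bar>\<phi> x\<bar>" by linarith
    then have px: "\<phi> x < - 2 * d" using nonpos[of x] by simp
    have "(norm v)^2 < \<delta>^2" using nv by (intro power_strict_mono) auto
    then have nv2: "(norm v)^2 < d" by (simp add: d_def)
    have "sqrt (1 + (norm v)^2) \<le> 1 + (norm v)^2 / 2" by (rule sqrt_one_plus_le) simp
    then have "sqrt (1 + (norm v)\<^sup>2) - 1 + \<phi> x < - d" using nv2 px d0 by linarith
    then show "p \<in> a_set \<phi> (- d)" by (simp add: a_set_def p)
  qed
  have sets: "a_set \<phi> (- d) \<in> sets lborel" using a_set_sets[of "- d"] by (simp only: lborel_prod)
  have bR: "ball (0::R3) R \<in> sets lborel" by measurable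
  have bd: "ball (0::R3) \<delta> \<in> sets lborel" by measurable
  have "emeasure lborel (ball (0::R3) R \<times> ball (0::R3) \<delta>) \<le> emeasure lborel (a_set \<phi> (- d))"
    by (rule emeasure_mono[OF sub sets])
  also have "\<dots> = ennreal (4 * pi / 3 * AA (- d))" using d0 by (intro emeasure_a_set) simp
  also have "emeasure lborel (ball (0::R3) R \<times> ball (0::R3) \<delta>)
      = ennreal (4 * pi / 3 * R ^ 3) * ennreal (4 * pi / 3 * \<delta> ^ 3)"
    unfolding emeasure_times_R3[OF bR bd] emeasure_ball_R3[OF less_imp_le[OF R0]]
      emeasure_ball_R3[OF less_imp_le[OF \<delta>0]] ..
  also have "\<dots> = ennreal ((4 * pi / 3 * R ^ 3) * (4 * pi / 3 * \<delta> ^ 3))"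
    using R0 \<delta>0 by (intro ennreal_mult[symmetric]) auto
  finally have "ennreal ((4 * pi / 3 * R ^ 3) * (4 * pi / 3 * \<delta> ^ 3)) \<le> ennreal (4 * pi / 3 * AA (- d))" .
  then have ineq: "(4 * pi / 3 * R ^ 3) * (4 * pi / 3 * \<delta> ^ 3) \<le> 4 * pi / 3 * AA (- d)"
    using AA_nonneg[of "- d"] by (subst (asm) ennreal_le_iff) auto
  have "R * \<delta> \<ge> c / (4 * d) * \<delta>" using R4 \<delta>0 by (intro mult_right_mono) auto
  also have "c / (4 * d) * \<delta> = c / (4 * \<delta>)" using \<delta>0 by (simp add: d_def power2_eq_square)
  finally have Rd: "R * \<delta> \<ge> c / (4 * \<delta>)" .
  then have "(R * \<delta>)^3 \<ge> (c / (4 * \<delta>))^3" using c \<delta>0 by (intro power_mono) auto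
  also have "(c / (4 * \<delta>))^3 = c^3 / (64 * \<delta>^3)" by (simp add: power_divide power_mult_distrib)
  finally have r1: "c^3 / (64 * \<delta>^3) \<le> R^3 * \<delta>^3" by (simp add: power_mult_distrib)
  have "\<delta>^2 \<le> 1" using \<delta>0 \<delta>1 by (simp add: power_le_one)
  then have "\<delta> * \<delta>^2 \<le> \<delta> * 1" using \<delta>0 by (intro mult_left_mono) auto
  then have d3: "\<delta>^3 \<le> \<delta>" by (simp add: power2_eq_square power3_eq_cube)
  have "c^3 / (64 * \<delta>) \<le> c^3 / (64 * \<delta>^3)"
    by (rule divide_left_mono) (use c \<delta>0 d3 in auto)
  moreover have "2 * (T + 1) \<le> c^3 / (64 * \<delta>)"
  proof -
    have "\<delta> * (128 * (T + 1)) \<le> c^3" using \<delta>T T by (simp add: le_divide_eq)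
    then have "2 * (T + 1) * (64 * \<delta>) \<le> c^3" by (simp add: algebra_simps)
    then show ?thesis using \<delta>0 by (simp add: le_divide_eq)
  qed
  ultimately have r2: "2 * (T + 1) \<le> R^3 * \<delta>^3" using r1 by linarith
  have p1: "4 * pi / 3 \<ge> 1" using pi_gt3 by simp
  have pi16: "1 * 1 \<le> (4 * pi / 3) * (4 * pi / 3)" by (rule mult_mono[OF p1 p1]) auto
  have "T < 2 * (T + 1)" using T by simp
  also have "\<dots> \<le> 1 * (R^3 * \<delta>^3)" using r2 by simp
  also have "\<dots> \<le> ((4 * pi / 3) * (4 * pi / 3)) * (R^3 * \<delta>^3)"
    by (rule mult_right_mono) (use pi16 R0 \<delta>0 in auto)
  also have "\<dots> = (4 * pi / 3 * R ^ 3) * (4 * pi / 3 * \<delta> ^ 3)" by (simp only: mult_ac)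
  also have "\<dots> \<le> 4 * pi / 3 * AA (- d)" by (rule ineq)
  finally show ?thesis using d0 by (intro exI[of _ "- d"]) simp
qed

end


context phi_ctx
begin

abbreviation II where "II \<equiv> {e. ess_inf \<phi> < ereal e \<and> e < 0}"

lemma a_phi_eq: assumes e: "e < 0" shows "a_phi \<phi> e = 4 * pi / 3 * AA e"
proof -
  have "a_phi \<phi> e = enn2real (emeasure lborel (a_set \<phi> e))" by (simp add: a_phi_def measure_def)
  also have "\<dots> = 4 * pi / 3 * AA e" unfolding emeasure_a_set[OF e]
    by (rule enn2real_ennreal) (use AA_nonneg[of e] in simp)
  finally show ?thesis .
qed

lemma F_deriv: assumes e: "e < 0" shows "(a_phi \<phi> has_real_derivative 4 * pi / 3 * BB e) (at e)"
proof -
  have "((\<lambda>e. 4 * pi / 3 * AA e) has_real_derivative 4 * pi / 3 * BB e) (at e)"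
    by (rule DERIV_cmult[OF AA_deriv[OF e]])
  then show ?thesis
    by (rule has_field_derivative_transform_within_open[where S="{..<0}"]) (use e a_phi_eq in auto)
qed

lemma F_cont: "e < 0 \<Longrightarrow> isCont (a_phi \<phi>) e"
  using F_deriv DERIV_isCont by blast

lemma DF_cont: "continuous_on {..<0} (\<lambda>e. 4 * pi / 3 * BB e)"
  by (rule continuous_at_imp_continuous_on) (auto intro!: continuous_intros BB_cont)

lemma F_C1: "a_phi \<phi> C1_differentiable_on {..<0}"
  unfolding C1_differentiable_on_def
proof (intro exI[of _ "\<lambda>e. 4 * pi / 3 * BB e"] conjI ballI)
  fix x :: real assume "x \<in> {..<0}"
  then have "x < 0" by simp
  then show "(a_phi \<phi> has_vector_derivative 4 * pi / 3 * BB x) (at x)"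
    unfolding has_real_derivative_iff_has_vector_derivative[symmetric] by (rule F_deriv)
next
  show "continuous_on {..<0} (\<lambda>e. 4 * pi / 3 * BB e)" by (rule DF_cont)
qed

lemma F_pos: "e \<in> II \<Longrightarrow> a_phi \<phi> e > 0"
proof -
  assume e: "e \<in> II"
  then have e0: "e < 0" by simp
  have "AA e > 0" using AA_pos_iff[OF e0] e by simp
  then show ?thesis unfolding a_phi_eq[OF e0] by (intro mult_pos_pos) auto
qed

lemma F_strict_mono: "strict_mono_on II (a_phi \<phi>)"
proof (rule strict_mono_onI)
  fix r s assume rs: "r \<in> II" "s \<in> II" "r < s"
  then have r0: "r < 0" and s0: "s < 0" by auto
  have "AA r < AA s" using AA_strict_mono rs by (simp add: strict_mono_on_def)
  then show "a_phi \<phi> r < a_phi \<phi> s"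
    unfolding a_phi_eq[OF r0] a_phi_eq[OF s0] by (intro mult_strict_left_mono) auto
qed

lemma F_surj:
  assumes c: "c > 0" and cb: "\<And>x. c \<le> (1 + norm x) * \<bar>\<phi> x\<bar>" and s: "s > 0"
  shows "\<exists>e\<in>II. a_phi \<phi> e = s"
proof -
  have k: "4 * pi / 3 > (0::real)" by simp
  obtain e1 where e1: "e1 < 0" "AA e1 \<le> s / (4 * pi / 3)"
    using AA_small[of "s / (4 * pi / 3)"] s by auto
  have F1: "a_phi \<phi> e1 \<le> s"
  proof -
    have "4 * pi / 3 * AA e1 \<le> 4 * pi / 3 * (s / (4 * pi / 3))"
      using e1(2) k by (intro mult_left_mono) auto
    also have "\<dots> = s" using k by simp
    finally show ?thesis unfolding a_phi_eq[OF e1(1)] .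
  qed
  obtain e2 where e2: "e2 < 0" "s < 4 * pi / 3 * AA e2"
    using AA_large[OF c cb s] by auto
  have F2: "s < a_phi \<phi> e2" unfolding a_phi_eq[OF e2(1)] by (rule e2(2))
  have e12: "e1 \<le> e2"
  proof (rule ccontr)
    assume "\<not> e1 \<le> e2"
    then have "AA e2 \<le> AA e1" using e1 by (intro AA_mono) auto
    then have "a_phi \<phi> e2 \<le> a_phi \<phi> e1"
      unfolding a_phi_eq[OF e1(1)] a_phi_eq[OF e2(1)] by (intro mult_left_mono) auto
    with F1 F2 show False by simp
  qed
  have "continuous_on {e1..e2} (a_phi \<phi>)"
    by (rule continuous_at_imp_continuous_on) (use e2 F_cont in auto)
  then obtain e where e: "e1 \<le> e" "e \<le> e2" "a_phi \<phi> e = s"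
    using IVT'[of "a_phi \<phi>" e1 s e2] F1 F2 e12 by auto
  have e0: "e < 0" using e e2 by simp
  have "4 * pi / 3 * AA e > 0" using e(3) s unfolding a_phi_eq[OF e0] by simp
  then have "AA e > 0" using k by (simp add: zero_less_mult_iff)
  then have "e \<in> II" using AA_pos_iff[OF e0] e0 by simp
  then show ?thesis using e by blast
qed

lemma F_bij:
  assumes c: "c > 0" and cb: "\<And>x. c \<le> (1 + norm x) * \<bar>\<phi> x\<bar>"
  shows "bij_betw (a_phi \<phi>) II {0<..}"
  unfolding bij_betw_def
proof
  show "inj_on (a_phi \<phi>) II" by (rule strict_mono_on_imp_inj_on[OF F_strict_mono])
  show "a_phi \<phi> ` II = {0<..}"
  proof
    show "a_phi \<phi> ` II \<subseteq> {0<..}" using F_pos by auto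
    show "{0<..} \<subseteq> a_phi \<phi> ` II"
    proof
      fix s :: real assume "s \<in> {0<..}"
      then obtain e where "e \<in> II" "a_phi \<phi> e = s" using F_surj[OF c cb, of s] by auto
      then show "s \<in> a_phi \<phi> ` II" by (metis imageI)
    qed
  qed
qed

lemma inv_C1:
  assumes c: "c > 0" and cb: "\<And>x. c \<le> (1 + norm x) * \<bar>\<phi> x\<bar>"
  shows "(inv_into II (a_phi \<phi>)) C1_differentiable_on {0<..}"
proof -
  define F where "F = a_phi \<phi>"
  define G where "G = inv_into II F"
  have bij: "bij_betw F II {0<..}" unfolding F_def by (rule F_bij[OF c cb])
  have inj: "inj_on F II" using bij by (simp add: bij_betw_def)
  have img: "F ` II = {0<..}" using bij by (simp add: bij_betw_def)
  have GI: "G s \<in> II" if "s > 0" for s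
    unfolding G_def by (rule inv_into_into) (use img that in simp)
  have FG: "F (G s) = s" if "s > 0" for s
    unfolding G_def by (rule f_inv_into_f) (use img that in simp)
  have GF: "G (F z) = z" if "z \<in> II" for z
    unfolding G_def by (rule inv_into_f_f[OF inj that])
  have Gcont: "isCont G s" if s: "s > 0" for s
  proof -
    define x where "x = G s"
    have xI: "x \<in> II" using GI[OF s] by (simp add: x_def)
    have x0: "x < 0" using xI by simp
    have Ax: "AA x > 0" using AA_pos_iff[OF x0] xI by simp
    from AA_cont[OF x0] Ax obtain d where d: "d > 0"
      "\<And>y. dist y x < d \<Longrightarrow> dist (AA y) (AA x) < AA x"
      unfolding continuous_at_eps_delta by blast
    define d2 where "d2 = min (d / 2) (- x / 2)"
    have d20: "d2 > 0" using d x0 by (simp add: d2_def)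
    have zI: "z \<in> II" if z: "\<bar>z - x\<bar> \<le> d2" for z
    proof -
      have dd1: "d2 \<le> d / 2" and dd2: "d2 \<le> - x / 2" by (simp_all add: d2_def)
      have zz: "z - x \<le> d2" "x - z \<le> d2" using z by (simp_all add: abs_le_iff)
      have "dist z x < d" unfolding dist_real_def using z dd1 d(1) by linarith
      then have "dist (AA z) (AA x) < AA x" by (rule d(2))
      then have "\<bar>AA z - AA x\<bar> < AA x" by (simp add: dist_real_def)
      then have Az: "AA z > 0" by (simp add: abs_less_iff)
      have z0: "z < 0" using zz dd2 x0 by linarith
      show ?thesis using AA_pos_iff[OF z0] Az z0 by simp
    qed
    have "isCont G (F x)"
    proof (rule isCont_inverse_function[where f=F and g=G and x=x, OF d20])
      show "G (F z) = z" if "\<bar>z - x\<bar> \<le> d2" for z using GF[OF zI[OF that]] .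
      show "isCont F z" if "\<bar>z - x\<bar> \<le> d2" for z
        using zI[OF that] F_cont unfolding F_def by simp
    qed
    then show ?thesis using FG[OF s] by (simp add: x_def)
  qed
  have Gder: "(G has_real_derivative inverse (4 * pi / 3 * BB (G s))) (at s)" if s: "s > 0" for s
  proof (rule DERIV_inverse_function[where a=0 and b="s + 1"])
    have "G s \<in> II" by (rule GI[OF s])
    then have g0: "G s < 0" by simp
    show "(F has_real_derivative 4 * pi / 3 * BB (G s)) (at (G s))"
      unfolding F_def by (rule F_deriv[OF g0])
    show "4 * pi / 3 * BB (G s) \<noteq> 0" using BB_pos_iff[OF g0] \<open>G s \<in> II\<close> by simp
    show "0 < s" "s < s + 1" using s by auto
    show "F (G y) = y" if "0 < y" "y < s + 1" for y using FG that by simp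
    show "isCont G s" by (rule Gcont[OF s])
  qed
  have Dcont: "continuous_on {0<..} (\<lambda>s. inverse (4 * pi / 3 * BB (G s)))"
  proof (rule continuous_at_imp_continuous_on, rule ballI)
    fix s :: real assume "s \<in> {0<..}"
    then have s: "s > 0" by simp
    have g0: "G s < 0" using GI[OF s] by simp
    have "BB (G s) > 0" using BB_pos_iff[OF g0] GI[OF s] by simp
    moreover have "isCont (\<lambda>s. BB (G s)) s" by (rule isCont_o2[OF Gcont[OF s] BB_cont[OF g0]])
    ultimately show "isCont (\<lambda>s. inverse (4 * pi / 3 * BB (G s))) s"
      by (intro continuous_intros) auto
  qed
  show ?thesis
    unfolding C1_differentiable_on_def G_def[symmetric] F_def[symmetric]
  proof (intro exI[of _ "\<lambda>s. inverse (4 * pi / 3 * BB (G s))"] conjI ballI)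
    fix s :: real assume "s \<in> {0<..}"
    then have "s > 0" by simp
    then show "(G has_vector_derivative inverse (4 * pi / 3 * BB (G s))) (at s)"
      unfolding has_real_derivative_iff_has_vector_derivative[symmetric] by (rule Gder)
  next
    show "continuous_on {0<..} (\<lambda>s. inverse (4 * pi / 3 * BB (G s)))" by (rule Dcont)
  qed
qed

end


lemma root_bound:
  fixes d a Y :: real
  assumes d: "d > 0" and a: "a > 0" and h: "d powr a \<le> Y"
  shows "d \<le> Y powr (1 / a)"
proof -
  have "d = (d powr a) powr (1 / a)" using d a by (simp add: powr_powr)
  also have "\<dots> \<le> Y powr (1 / a)" using h a by (intro powr_mono2) auto
  finally show ?thesis .
qed

lemma inv_bound_aux:
  fixes d s C L q N :: real
  assumes d: "d > 0" and s: "s > 0" and C: "C > 0" and q: "q > 3" and L: "L \<ge> 0"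
    and N: "N = L powr q"
    and h: "s \<le> C / d powr (q - 3) * (1 + 1 / d ^ 3) * N"
  shows "d \<le> max ((2 * C) powr (1 / (q - 3))) ((2 * C) powr (1 / q)) *
               (L powr (q / (q - 3)) / s powr (1 / (q - 3)) + L / s powr (1 / q))"
proof -
  define Ct where "Ct = max ((2 * C) powr (1 / (q - 3))) ((2 * C) powr (1 / q))"
  define T1 where "T1 = L powr (q / (q - 3)) / s powr (1 / (q - 3))"
  define T2 where "T2 = L / s powr (1 / q)"
  have T1: "T1 \<ge> 0" and T2: "T2 \<ge> 0" using L by (simp_all add: T1_def T2_def)
  have Ct1: "(2 * C) powr (1 / (q - 3)) \<le> Ct" and Ct2: "(2 * C) powr (1 / q) \<le> Ct"
    by (simp_all add: Ct_def)
  have N0: "N \<ge> 0" using N by simp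
  define P where "P = d powr (q - 3)"
  have P0: "P > 0" using d by (simp add: P_def)
  have dq: "d powr q = P * d ^ 3"
  proof -
    have "d powr q = d powr ((q - 3) + 3)" by simp
    also have "\<dots> = P * d powr 3" unfolding P_def by (rule powr_add)
    also have "d powr (3::real) = d ^ 3" using powr_realpow[OF d, of 3] by simp
    finally show ?thesis .
  qed
  have d3: "d ^ 3 > 0" using d by simp
  have split: "C / P * (1 + 1 / d ^ 3) * N = C * N / P + C * N / (P * d ^ 3)"
    using P0 d3 by (simp add: field_simps)
  from h have "s \<le> C * N / P + C * N / d powr q" unfolding P_def[symmetric] split dq .
  then consider "s / 2 \<le> C * N / P" | "s / 2 \<le> C * N / d powr q" by linarith
  then show ?thesis
  proof cases
    case 1
    have "s / 2 * P \<le> C * N" using 1 P0 by (simp add: pos_le_divide_eq)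
    moreover have "s / 2 * P = (P * s) / 2" by simp
    ultimately have "P * s \<le> 2 * C * N" by linarith
    then have "P \<le> 2 * C * N / s" using s by (simp add: pos_le_divide_eq)
    then have "d \<le> (2 * C * N / s) powr (1 / (q - 3))"
      using root_bound[OF d, of "q - 3"] q unfolding P_def by simp
    also have "(2 * C * N / s) powr (1 / (q - 3)) = (2 * C) powr (1 / (q - 3)) * T1"
    proof -
      have "N powr (1 / (q - 3)) = L powr (q / (q - 3))" using N by (simp add: powr_powr)
      then show ?thesis unfolding T1_def by (simp add: powr_mult powr_divide)
    qed
    also have "\<dots> \<le> Ct * T1" using Ct1 T1 by (rule mult_right_mono)
    also have "\<dots> \<le> Ct * (T1 + T2)" using T2 Ct1 by (intro mult_left_mono) (auto intro: order_trans[OF _ Ct1])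
    finally show ?thesis unfolding Ct_def T1_def T2_def .
  next
    case 2
    have dq0: "d powr q > 0" using d by simp
    have "s / 2 * d powr q \<le> C * N" using 2 dq0 by (simp add: pos_le_divide_eq)
    moreover have "s / 2 * d powr q = (d powr q * s) / 2" by simp
    ultimately have "d powr q * s \<le> 2 * C * N" by linarith
    then have "d powr q \<le> 2 * C * N / s" using s by (simp add: pos_le_divide_eq)
    then have "d \<le> (2 * C * N / s) powr (1 / q)"
      using root_bound[OF d, of q] q by simp
    also have "(2 * C * N / s) powr (1 / q) = (2 * C) powr (1 / q) * T2"
    proof -
      have "N powr (1 / q) = L" using N q L by (simp add: powr_powr)
      then show ?thesis unfolding T2_def by (simp add: powr_mult powr_divide)
    qed
    also have "\<dots> \<le> Ct * T2" using Ct2 T2 by (rule mult_right_mono)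
    also have "\<dots> \<le> Ct * (T1 + T2)" using T1 Ct2 by (intro mult_left_mono) (auto intro: order_trans[OF _ Ct2])
    finally show ?thesis unfolding Ct_def T1_def T2_def .
  qed
qed


context phi_ctx
begin

lemma Lp_pow: "(Lp_norm q \<phi>) powr q = NN"
proof -
  have "(Lp_norm q \<phi>) powr q = NN powr (1 / q * q)" unfolding Lp_norm_def NN_def[symmetric] by (rule powr_powr)
  also have "1 / q * q = 1" using q3 by simp
  finally show ?thesis using NN_nonneg by simp
qed

lemma Lp_nonneg: "Lp_norm q \<phi> \<ge> 0"
  unfolding Lp_norm_def by simp

lemma bound1: assumes e: "e < 0"
  shows "a_phi \<phi> e \<le> (16 * pi / 3) / \<bar>e\<bar> powr (q - 3) * (1 + 1 / \<bar>e\<bar> ^ 3) * (Lp_norm q \<phi>) powr q"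
proof -
  define d where "d = - e"
  have d: "d > 0" "\<bar>e\<bar> = d" using e by (auto simp: d_def)
  define P where "P = d powr (q - 3)"
  have P0: "P > 0" using d by (simp add: P_def)
  have "a_phi \<phi> e = 4 * pi / 3 * AA e" by (rule a_phi_eq[OF e])
  also have "\<dots> \<le> 4 * pi / 3 * (Kg q (- e) * NN)" using AA_bound[OF e] by (intro mult_left_mono) auto
  also have "4 * pi / 3 * (Kg q (- e) * NN) = (16 * pi / 3) / P * (1 + 1 / d ^ 3) * NN"
    unfolding Kg_def d_def[symmetric] P_def[symmetric] using P0 by (simp add: mult_ac)
  finally show ?thesis unfolding Lp_pow d(2) P_def .
qed

lemma bound2:
  assumes c: "c > 0" and cb: "\<And>x. c \<le> (1 + norm x) * \<bar>\<phi> x\<bar>" and s: "s > 0"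
  shows "inv_into II (a_phi \<phi>) s \<ge>
    - (max ((2 * (16 * pi / 3)) powr (1 / (q - 3))) ((2 * (16 * pi / 3)) powr (1 / q))) *
      ((Lp_norm q \<phi>) powr (q / (q - 3)) / s powr (1 / (q - 3)) + Lp_norm q \<phi> / s powr (1 / q))"
proof -
  have bij: "bij_betw (a_phi \<phi>) II {0<..}" by (rule F_bij[OF c cb])
  have img: "a_phi \<phi> ` II = {0<..}" using bij by (simp add: bij_betw_def)
  define e where "e = inv_into II (a_phi \<phi>) s"
  have eI: "e \<in> II" unfolding e_def by (rule inv_into_into) (use img s in simp)
  have Fe: "a_phi \<phi> e = s" unfolding e_def by (rule f_inv_into_f) (use img s in simp)
  have e0: "e < 0" using eI by simp
  have "s \<le> (16 * pi / 3) / (- e) powr (q - 3) * (1 + 1 / (- e) ^ 3) * NN"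
    using bound1[OF e0] e0 Fe unfolding Lp_pow by simp
  then have "- e \<le> max ((2 * (16 * pi / 3)) powr (1 / (q - 3))) ((2 * (16 * pi / 3)) powr (1 / q)) *
      ((Lp_norm q \<phi>) powr (q / (q - 3)) / s powr (1 / (q - 3)) + Lp_norm q \<phi> / s powr (1 / q))"
    by (intro inv_bound_aux[where N=NN]) (use e0 s q3 Lp_nonneg Lp_pow in auto)
  then show ?thesis unfolding e_def[symmetric] by simp
qed

end


lemma gg_stmt: "(max 0 ((max 0 (1 + e - \<phi> x))\<^sup>2 - 1)) powr (3/2) = gg (e - \<phi> x)"
  by (simp add: gg_def add_diff_eq)

theorem lemmaA1:
  fixes q :: real
  assumes "q > 3"
  shows "(\<forall>\<phi>\<in>Phi_q q.
            (\<forall>e<0. emeasure lborel (a_set \<phi> e) < \<infinity> \<and>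
                   integrable lborel (\<lambda>x. (max 0 ((max 0 (1 + e - \<phi> x))\<^sup>2 - 1)) powr (3/2)) \<and>
                   a_phi \<phi> e = 4 * pi / 3 *
                     (\<integral>x. (max 0 ((max 0 (1 + e - \<phi> x))\<^sup>2 - 1)) powr (3/2) \<partial>lborel)) \<and>
            (a_phi \<phi>) C1_differentiable_on {..<0} \<and>
            strict_mono_on {e. ess_inf \<phi> < ereal e \<and> e < 0} (a_phi \<phi>) \<and>
            bij_betw (a_phi \<phi>) {e. ess_inf \<phi> < ereal e \<and> e < 0} {0<..} \<and>
            (a_phi \<phi>) C1_differentiable_on {e. ess_inf \<phi> < ereal e \<and> e < 0} \<and>
            (inv_into {e. ess_inf \<phi> < ereal e \<and> e < 0} (a_phi \<phi>)) C1_differentiable_on {0<..})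
       \<and> (\<exists>C Ct. C > 0 \<and> Ct > 0 \<and>
            (\<forall>\<phi>\<in>Phi_q q. \<forall>e<0. \<forall>s>0.
               a_phi \<phi> e \<le> C / \<bar>e\<bar> powr (q - 3) * (1 + 1 / \<bar>e\<bar> ^ 3) * (Lp_norm q \<phi>) powr q \<and>
               inv_into {e. ess_inf \<phi> < ereal e \<and> e < 0} (a_phi \<phi>) s \<ge>
                 - Ct * ((Lp_norm q \<phi>) powr (q / (q - 3)) / s powr (1 / (q - 3))
                         + Lp_norm q \<phi> / s powr (1 / q))))"
proof -
  have ctx: "phi_ctx \<phi> q" if "\<phi> \<in> Phi_q q" for \<phi>
    using that assms unfolding Phi_q_def in_Lp_def by (intro phi_ctx.intro) auto
  have cb: "m_inf \<phi> \<le> (1 + norm x) * \<bar>\<phi> x\<bar>" for \<phi> :: "R3 \<Rightarrow> real" and x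
    unfolding m_inf_def
  proof (rule cINF_lower)
    show "bdd_below (range (\<lambda>x. (1 + norm x) * \<bar>\<phi> x\<bar>))"
      by (rule bdd_belowI2[where m=0]) (simp add: add_nonneg_nonneg)
  qed simp
  have mpos: "m_inf \<phi> > 0" if "\<phi> \<in> Phi_q q" for \<phi> using that by (simp add: Phi_q_def)
  show ?thesis
  proof (rule conjI)
    show "\<forall>\<phi>\<in>Phi_q q.
            (\<forall>e<0. emeasure lborel (a_set \<phi> e) < \<infinity> \<and>
                   integrable lborel (\<lambda>x. (max 0 ((max 0 (1 + e - \<phi> x))\<^sup>2 - 1)) powr (3/2)) \<and>
                   a_phi \<phi> e = 4 * pi / 3 *
                     (\<integral>x. (max 0 ((max 0 (1 + e - \<phi> x))\<^sup>2 - 1)) powr (3/2) \<partial>lborel)) \<and>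
            (a_phi \<phi>) C1_differentiable_on {..<0} \<and>
            strict_mono_on {e. ess_inf \<phi> < ereal e \<and> e < 0} (a_phi \<phi>) \<and>
            bij_betw (a_phi \<phi>) {e. ess_inf \<phi> < ereal e \<and> e < 0} {0<..} \<and>
            (a_phi \<phi>) C1_differentiable_on {e. ess_inf \<phi> < ereal e \<and> e < 0} \<and>
            (inv_into {e. ess_inf \<phi> < ereal e \<and> e < 0} (a_phi \<phi>)) C1_differentiable_on {0<..}"
    proof (rule ballI)
      fix \<phi> assume \<phi>: "\<phi> \<in> Phi_q q"
      interpret phi_ctx \<phi> q by (rule ctx[OF \<phi>])
      have p1: "\<forall>e<0. emeasure lborel (a_set \<phi> e) < \<infinity> \<and>
                   integrable lborel (\<lambda>x. (max 0 ((max 0 (1 + e - \<phi> x))\<^sup>2 - 1)) powr (3/2)) \<and>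
                   a_phi \<phi> e = 4 * pi / 3 *
                     (\<integral>x. (max 0 ((max 0 (1 + e - \<phi> x))\<^sup>2 - 1)) powr (3/2) \<partial>lborel)"
        unfolding gg_stmt
      proof (intro allI impI conjI)
        fix e :: real assume e: "e < 0"
        show "emeasure lborel (a_set \<phi> e) < \<infinity>" unfolding emeasure_a_set[OF e] by simp
        show "integrable lborel (\<lambda>x. gg (e - \<phi> x))" by (rule int_g[OF e])
        show "a_phi \<phi> e = 4 * pi / 3 * (\<integral>x. gg (e - \<phi> x) \<partial>lborel)"
          using a_phi_eq[OF e] by (simp add: AA_def)
      qed
      have sub: "{e. ess_inf \<phi> < ereal e \<and> e < 0} \<subseteq> {..<0}" by auto
      show "(\<forall>e<0. emeasure lborel (a_set \<phi> e) < \<infinity> \<and>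
                   integrable lborel (\<lambda>x. (max 0 ((max 0 (1 + e - \<phi> x))\<^sup>2 - 1)) powr (3/2)) \<and>
                   a_phi \<phi> e = 4 * pi / 3 *
                     (\<integral>x. (max 0 ((max 0 (1 + e - \<phi> x))\<^sup>2 - 1)) powr (3/2) \<partial>lborel)) \<and>
            (a_phi \<phi>) C1_differentiable_on {..<0} \<and>
            strict_mono_on {e. ess_inf \<phi> < ereal e \<and> e < 0} (a_phi \<phi>) \<and>
            bij_betw (a_phi \<phi>) {e. ess_inf \<phi> < ereal e \<and> e < 0} {0<..} \<and>
            (a_phi \<phi>) C1_differentiable_on {e. ess_inf \<phi> < ereal e \<and> e < 0} \<and>
            (inv_into {e. ess_inf \<phi> < ereal e \<and> e < 0} (a_phi \<phi>)) C1_differentiable_on {0<..}"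
        using p1 F_C1 F_strict_mono F_bij[OF mpos[OF \<phi>] cb] C1_differentiable_on_subset[OF F_C1 sub]
          inv_C1[OF mpos[OF \<phi>] cb] by blast
    qed
  next
    define Ct where "Ct = max ((2 * (16 * pi / 3)) powr (1 / (q - 3))) ((2 * (16 * pi / (3::real))) powr (1 / q))"
    have Ct0: "Ct > 0" unfolding Ct_def by (simp add: less_max_iff_disj)
    show "\<exists>C Ct. C > 0 \<and> Ct > 0 \<and>
            (\<forall>\<phi>\<in>Phi_q q. \<forall>e<0. \<forall>s>0.
               a_phi \<phi> e \<le> C / \<bar>e\<bar> powr (q - 3) * (1 + 1 / \<bar>e\<bar> ^ 3) * (Lp_norm q \<phi>) powr q \<and>
               inv_into {e. ess_inf \<phi> < ereal e \<and> e < 0} (a_phi \<phi>) s \<ge>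
                 - Ct * ((Lp_norm q \<phi>) powr (q / (q - 3)) / s powr (1 / (q - 3))
                         + Lp_norm q \<phi> / s powr (1 / q)))"
    proof (rule exI[of _ "16 * pi / 3"], rule exI[of _ Ct], intro conjI ballI allI impI)
      show "16 * pi / 3 > (0::real)" by simp
      show "Ct > 0" by (rule Ct0)
      fix \<phi> e s assume \<phi>: "\<phi> \<in> Phi_q q" and e: "e < (0::real)" and s: "s > (0::real)"
      interpret phi_ctx \<phi> q by (rule ctx[OF \<phi>])
      show "a_phi \<phi> e \<le> 16 * pi / 3 / \<bar>e\<bar> powr (q - 3) * (1 + 1 / \<bar>e\<bar> ^ 3) * (Lp_norm q \<phi>) powr q"
        by (rule bound1[OF e])
      show "inv_into {e. ess_inf \<phi> < ereal e \<and> e < 0} (a_phi \<phi>) s \<ge>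
                 - Ct * ((Lp_norm q \<phi>) powr (q / (q - 3)) / s powr (1 / (q - 3))
                         + Lp_norm q \<phi> / s powr (1 / q))"
        unfolding Ct_def by (rule bound2[OF mpos[OF \<phi>] cb s])
    qed
  qed
qed

end
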